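(* Let $n\in\mathbb{N}$, let $\omega_1,\dots,\omega_n\in\mathbb{C}$, and let $r_k=|r_k|e^{i\phi_k}\in\mathbb{C}$ ($k\in[n]$) satisfy $\big|\sum_{k\in[n]}\omega_ke^{i\phi_k}\big|=1$. Then: (i) every $\omega_k$ can be written as a finite sum $\omega_k=\sum_{j\in[m_k]}e^{i\theta_{k,j}}$ with $\theta_{k,j}\in\mathbb{R}$; (ii) if for each $k$ there are two such representations $\omega_k=\sum_{j\in[m_k]}e^{i\theta_{k,j}}=\sum_{j\in[m'_k]}e^{i\theta'_{k,j}}$, and $a_{k,j}=r_ke^{i\theta_{k,j}}$, $a'_{k,j}=r_ke^{i\theta'_{k,j}}$, then for every $\alpha\in\mathbb{C}\setminus i\mathbb{R}$ $$\epsilon_\alpha^{-1}\Big(\sum_{(k,j)\in[n]\times[m_k]}\epsilon_\alpha(a_{k,j})\Big)=\epsilon_\alpha^{-1}\Big(\sum_{(k,j)\in[n]\times[m'_k]}\epsilon_\alpha(a'_{k,j})\Big),$$ and consequently the limits of these expressions as $|\alpha|\to0$, as $|\alpha|\to\infty$ with $\mathrm{Re}\,\alpha>0$, or as $|\alpha|\to\infty$ with $\mathrm{Re}\,\alpha<0$, along a fixed argument $\arg\alpha=\Theta$, also coincide. Hence the weighted generalized mean $M_\alpha((r_1,\omega_1),\dots,(r_n,\omega_n)):={}^{\alpha}\!\sum_{(k,j)}a_{k,j}$ (and its limiting versions: weighted geometric mean, maximum and minimum in direction $\Theta$) is independent of the chosen representations of the $\omega_k$.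
   Context: For $\alpha\in\mathbb{C}\setminus i\mathbb{R}$, $\epsilon_\alpha:\mathbb{C}\to\mathbb{C}$ is defined by $\epsilon_\alpha(0)=0$ and $\epsilon_\alpha(rs)=r^\alpha s=e^{\alpha\ln r}s$ for $r>0$, $|s|=1$; it is a bijective multiplicative map. ${}^{\alpha}\!\sum_ta_t:=\epsilon_\alpha^{-1}\big(\sum_t\epsilon_\alpha(a_t)\big)$. *)

theory Defs
  imports "HOL-Analysis.Analysis"
begin

text \<open>The map epsilon_alpha: eps(0) = 0 and eps(r s) = r powers alpha times s, i.e.
  exp(alpha ln r) s, for r > 0 and |s| = 1 (so r = |z| and s = z / |z|).\<close>
definition eps :: "complex \<Rightarrow> complex \<Rightarrow> complex" where
  "eps \<alpha> z = (if z = 0 then 0 else exp (\<alpha> * of_real (ln (cmod z))) * (z / of_real (cmod z)))"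

definition alpha_sum :: "complex \<Rightarrow> ('i \<Rightarrow> complex) \<Rightarrow> 'i set \<Rightarrow> complex" where
  "alpha_sum \<alpha> a A = inv (eps \<alpha>) (\<Sum>t\<in>A. eps \<alpha> (a t))"

end

theory Submission
  imports Defs
begin

lemma eps_cis: "eps a (z * cis t) = eps a z * cis t"
  by (simp add: eps_def norm_mult)

lemma sum_eq_aux:
  fixes m :: "nat \<Rightarrow> nat" and \<theta> :: "nat \<Rightarrow> nat \<Rightarrow> real"
  shows "(\<Sum>x\<in>(SIGMA k:{..<n}. {..<m k}). eps a ((\<lambda>(k, j). r k * cis (\<theta> k j)) x))
       = (\<Sum>k<n. eps a (r k) * (\<Sum>j<m k. cis (\<theta> k j)))"
proof -
  have "(\<Sum>x\<in>(SIGMA k:{..<n}. {..<m k}). eps a ((\<lambda>(k, j). r k * cis (\<theta> k j)) x))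
      = (\<Sum>k<n. \<Sum>j<m k. eps a (r k * cis (\<theta> k j)))"
    by (subst sum.Sigma) (auto simp: case_prod_beta)
  also have "\<dots> = (\<Sum>k<n. eps a (r k) * (\<Sum>j<m k. cis (\<theta> k j)))"
    by (simp add: eps_cis sum_distrib_left)
  finally show ?thesis .
qed

lemma alpha_sum_eq:
  fixes m m' :: "nat \<Rightarrow> nat" and \<theta> \<theta>' :: "nat \<Rightarrow> nat \<Rightarrow> real"
  assumes "\<forall>k<n. \<omega> k = (\<Sum>j<m k. cis (\<theta> k j)) \<and> \<omega> k = (\<Sum>j<m' k. cis (\<theta>' k j))"
  shows "alpha_sum a (\<lambda>(k, j). r k * cis (\<theta> k j)) (SIGMA k:{..<n}. {..<m k})
       = alpha_sum a (\<lambda>(k, j). r k * cis (\<theta>' k j)) (SIGMA k:{..<n}. {..<m' k})"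
proof -
  have "(\<Sum>k<n. eps a (r k) * (\<Sum>j<m k. cis (\<theta> k j))) = (\<Sum>k<n. eps a (r k) * (\<Sum>j<m' k. cis (\<theta>' k j)))"
    using assms by (intro sum.cong) auto
  then show ?thesis unfolding alpha_sum_def by (simp only: sum_eq_aux)
qed

lemma rep_exists:
  fixes w :: complex
  shows "\<exists>(m::nat) (\<theta>::nat \<Rightarrow> real). w = (\<Sum>j<m. cis (\<theta> j))"
proof (cases "w = 0")
  case True
  then show ?thesis by (intro exI[of _ 0]) auto
next
  case False
  define N :: nat where "N = nat \<lceil>cmod w\<rceil>"
  have Npos: "N \<ge> 1" using False unfolding N_def by (simp add: Suc_le_eq)
  have le: "cmod w \<le> real N" unfolding N_def by linarith
  define c :: real where "c = cmod w / (2 * real N)"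
  have c01: "0 \<le> c" "c \<le> 1" using le Npos unfolding c_def by (auto simp: field_simps)
  define \<beta> :: real where "\<beta> = arccos c"
  have cb: "cos \<beta> = c" unfolding \<beta>_def using c01 by (simp add: cos_arccos)
  define \<psi> :: real where "\<psi> = Arg w"
  have wpol: "w = of_real (cmod w) * cis \<psi>" unfolding \<psi>_def by (simp add: cis_Arg Complex.sgn_eq False)
  define \<theta> where "\<theta> = (\<lambda>j::nat. if even j then \<psi> + \<beta> else \<psi> - \<beta>)"
  have pair: "cis (\<psi> + \<beta>) + cis (\<psi> - \<beta>) = of_real (2 * c) * cis \<psi>"
    by (simp add: cis_mult[symmetric] cb[symmetric] complex_eq_iff cos_add cos_diff sin_add sin_diff)
  have "(\<Sum>j<2*N. cis (\<theta> j)) = of_nat N * (of_real (2*c) * cis \<psi>)"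
  proof (induction N)
    case 0 then show ?case by simp
  next
    case (Suc N)
    have "(\<Sum>j<2*Suc N. cis (\<theta> j)) = (\<Sum>j<2*N. cis (\<theta> j)) + cis (\<theta> (2*N)) + cis (\<theta> (2*N+1))"
      by (simp add: mult_2)
    also have "\<dots> = of_nat N * (of_real (2*c) * cis \<psi>) + (cis (\<psi> + \<beta>) + cis (\<psi> - \<beta>))"
      using Suc by (simp add: \<theta>_def)
    finally show ?case using pair by (simp add: algebra_simps)
  qed
  also have "\<dots> = w"
    using Npos by (subst wpol) (simp add: c_def field_simps)
  finally show ?thesis by (intro exI[of _ "2*N"] exI[of _ \<theta>]) simp
qed

theorem mainTheorem7:
  fixes n :: nat and \<omega> r :: "nat \<Rightarrow> complex" and \<phi> :: "nat \<Rightarrow> real"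
  assumes polar: "\<forall>k<n. r k = of_real (cmod (r k)) * cis (\<phi> k)"
    and norm1: "cmod (\<Sum>k<n. \<omega> k * cis (\<phi> k)) = 1"
  shows "(\<forall>k<n. \<exists>(m::nat) (\<theta>::nat \<Rightarrow> real). \<omega> k = (\<Sum>j<m. cis (\<theta> j)))
    \<and> (\<forall>(m::nat \<Rightarrow> nat) (\<theta>::nat \<Rightarrow> nat \<Rightarrow> real) (m'::nat \<Rightarrow> nat) (\<theta>'::nat \<Rightarrow> nat \<Rightarrow> real).
        (\<forall>k<n. \<omega> k = (\<Sum>j<m k. cis (\<theta> k j)) \<and> \<omega> k = (\<Sum>j<m' k. cis (\<theta>' k j))) \<longrightarrow>
        ((\<forall>\<alpha>. Re \<alpha> \<noteq> 0 \<longrightarrow>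
            alpha_sum \<alpha> (\<lambda>(k, j). r k * cis (\<theta> k j)) (SIGMA k:{..<n}. {..<m k})
          = alpha_sum \<alpha> (\<lambda>(k, j). r k * cis (\<theta>' k j)) (SIGMA k:{..<n}. {..<m' k}))
        \<and> (\<forall>\<Theta> L. cos \<Theta> \<noteq> 0 \<longrightarrow>
            ((((\<lambda>t::real. alpha_sum (of_real t * cis \<Theta>) (\<lambda>(k, j). r k * cis (\<theta> k j)) (SIGMA k:{..<n}. {..<m k})) \<longlongrightarrow> L) (at_right 0)
              \<longleftrightarrow> ((\<lambda>t::real. alpha_sum (of_real t * cis \<Theta>) (\<lambda>(k, j). r k * cis (\<theta>' k j)) (SIGMA k:{..<n}. {..<m' k})) \<longlongrightarrow> L) (at_right 0))
            \<and> (((\<lambda>t::real. alpha_sum (of_real t * cis \<Theta>) (\<lambda>(k, j). r k * cis (\<theta> k j)) (SIGMA k:{..<n}. {..<m k})) \<longlongrightarrow> L) at_top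
              \<longleftrightarrow> ((\<lambda>t::real. alpha_sum (of_real t * cis \<Theta>) (\<lambda>(k, j). r k * cis (\<theta>' k j)) (SIGMA k:{..<n}. {..<m' k})) \<longlongrightarrow> L) at_top)))))"
proof (intro conjI allI impI)
  fix k assume "k < n"
  show "\<exists>(m::nat) (\<theta>::nat \<Rightarrow> real). \<omega> k = (\<Sum>j<m. cis (\<theta> j))" by (rule rep_exists)
next
  fix m m' :: "nat \<Rightarrow> nat" and \<theta> \<theta>' :: "nat \<Rightarrow> nat \<Rightarrow> real" and \<alpha> :: complex
  assume h: "\<forall>k<n. \<omega> k = (\<Sum>j<m k. cis (\<theta> k j)) \<and> \<omega> k = (\<Sum>j<m' k. cis (\<theta>' k j))"
  show "alpha_sum \<alpha> (\<lambda>(k, j). r k * cis (\<theta> k j)) (SIGMA k:{..<n}. {..<m k})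
          = alpha_sum \<alpha> (\<lambda>(k, j). r k * cis (\<theta>' k j)) (SIGMA k:{..<n}. {..<m' k})"
    using alpha_sum_eq[OF h] .
next
  fix m m' :: "nat \<Rightarrow> nat" and \<theta> \<theta>' :: "nat \<Rightarrow> nat \<Rightarrow> real" and \<Theta> and L :: complex
  assume h: "\<forall>k<n. \<omega> k = (\<Sum>j<m k. cis (\<theta> k j)) \<and> \<omega> k = (\<Sum>j<m' k. cis (\<theta>' k j))"
  have eq: "(\<lambda>t::real. alpha_sum (of_real t * cis \<Theta>) (\<lambda>(k, j). r k * cis (\<theta> k j)) (SIGMA k:{..<n}. {..<m k}))
     = (\<lambda>t::real. alpha_sum (of_real t * cis \<Theta>) (\<lambda>(k, j). r k * cis (\<theta>' k j)) (SIGMA k:{..<n}. {..<m' k}))"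
    using alpha_sum_eq[OF h] by blast
  show "(((\<lambda>t::real. alpha_sum (of_real t * cis \<Theta>) (\<lambda>(k, j). r k * cis (\<theta> k j)) (SIGMA k:{..<n}. {..<m k})) \<longlongrightarrow> L) (at_right 0)
              \<longleftrightarrow> ((\<lambda>t::real. alpha_sum (of_real t * cis \<Theta>) (\<lambda>(k, j). r k * cis (\<theta>' k j)) (SIGMA k:{..<n}. {..<m' k})) \<longlongrightarrow> L) (at_right 0))"
    by (simp only: eq)
  show "(((\<lambda>t::real. alpha_sum (of_real t * cis \<Theta>) (\<lambda>(k, j). r k * cis (\<theta> k j)) (SIGMA k:{..<n}. {..<m k})) \<longlongrightarrow> L) at_top
              \<longleftrightarrow> ((\<lambda>t::real. alpha_sum (of_real t * cis \<Theta>) (\<lambda>(k, j). r k * cis (\<theta>' k j)) (SIGMA k:{..<n}. {..<m' k})) \<longlongrightarrow> L) at_top)"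
    by (simp only: eq)
qed

end
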